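(* Let $P=(P_1,\ldots,P_n)$ be a profile over a set of alternatives $A=\{a_1,\ldots,a_m\}$ with voter set $N=\{1,\ldots,n\}$, such that $P$ is single-crossing with respect to a tree $T$ on $N$ which is minimal for $P$. Let $w_{\mathrm{opt}}$ be an optimal $k$-assignment for $P$ (for a given misrepresentation function, under the Chamberlin–Courant rule). Let voter $1$ be an arbitrary vertex of $T$, and let $b\in A$ be the least preferred alternative of voter $1$ among the alternatives in $w_{\mathrm{opt}}(N)$. Then the set of voters $w_{\mathrm{opt}}^{-1}(b)$ is the vertex set of a terminal subtree of $T$.
   Context: Voter $v$ prefers $a$ to $b$ is written $a\succ_v b$; $\mathrm{pos}_v(c)$ is the position of $c$ in voter $v$'s order. Given a tree $T=(N,E)$, $P$ is single-crossing with respect to $T$ if for every pair of distinct alternatives $a,b$ either (i) there is an edge $e\in E$ (an "$ab$-cut") whose removal splits $T$ into two subtrees with vertex sets $V_1,V_2$ such that all voters in $V_1$ prefer $a$ to $b$ and all voters in $V_2$ prefer $b$ to $a$, or (ii) all voters agree on the relative order of $a$ and $b$. $T$ is minimal for $P$ if every edge of $T$ is an $ab$-cut for some pair $a,b$. A subtree $T'$ of $T$ is terminal if $T\setminus T'$ (the subgraph induced on the remaining vertices) is also a tree. A misrepresentation function is a map $r:N\times A\to\mathbb{Q}_{\ge0}$ with $\mathrm{pos}_v(c)<\mathrm{pos}_v(c')\Rightarrow r(v,c)\le r(v,c')$. A $k$-assignment is a map $w:N\to A$ with $|w(N)|\le k$; its total misrepresentation is $\sum_{v\in N}r(v,w(v))$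 (utilitarian) or $\max_{v\in N}r(v,w(v))$ (egalitarian); an optimal $k$-assignment minimizes it.
   Formalization: The optimal k-assignment $w_{\mathrm{opt}}$ also gives every voter her most preferred alternative among those in $w_{\mathrm{opt}}(N)$, besides minimizing the total misrepresentation. The statement above fails without it. *)

theory Defs
  imports Complex_Main
begin

text \<open>pref v a b means: voter v strictly prefers a to b.\<close>

definition strict_linear_order_on :: "'a set \<Rightarrow> ('a \<Rightarrow> 'a \<Rightarrow> bool) \<Rightarrow> bool" where
  "strict_linear_order_on A R \<longleftrightarrow>
     (\<forall>a\<in>A. \<not> R a a) \<and>
     (\<forall>a\<in>A. \<forall>b\<in>A. \<forall>c\<in>A. R a b \<longrightarrow> R b c \<longrightarrow> R a c) \<and>
     (\<forall>a\<in>A. \<forall>b\<in>A. a \<noteq> b \<longrightarrow> R a b \<or> R b a)"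

definition profile :: "'v set \<Rightarrow> 'a set \<Rightarrow> ('v \<Rightarrow> 'a \<Rightarrow> 'a \<Rightarrow> bool) \<Rightarrow> bool" where
  "profile N A pref \<longleftrightarrow> finite N \<and> N \<noteq> {} \<and> finite A \<and> A \<noteq> {} \<and>
     (\<forall>v\<in>N. strict_linear_order_on A (pref v))"

definition induced_edges :: "'v set set \<Rightarrow> 'v set \<Rightarrow> 'v set set" where
  "induced_edges E V = {e \<in> E. e \<subseteq> V}"

definition adj_rel :: "'v set set \<Rightarrow> ('v \<times> 'v) set" where
  "adj_rel E = {(u, v). {u, v} \<in> E \<and> u \<noteq> v}"

definition connected_graph :: "'v set \<Rightarrow> 'v set set \<Rightarrow> bool" where
  "connected_graph V E \<longleftrightarrow> (\<forall>u\<in>V. \<forall>v\<in>V. (u, v) \<in> (adj_rel E)\<^sup>*)"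

definition is_cycle :: "'v set set \<Rightarrow> 'v list \<Rightarrow> bool" where
  "is_cycle E cs \<longleftrightarrow> length cs \<ge> 3 \<and> distinct cs \<and>
     (\<forall>i < length cs - 1. {cs ! i, cs ! Suc i} \<in> E) \<and> {last cs, hd cs} \<in> E"

definition is_tree :: "'v set \<Rightarrow> 'v set set \<Rightarrow> bool" where
  "is_tree V E \<longleftrightarrow> finite V \<and> V \<noteq> {} \<and>
     (\<forall>e\<in>E. e \<subseteq> V \<and> card e = 2) \<and>
     connected_graph V E \<and> \<not> (\<exists>cs. is_cycle E cs)"

definition is_subtree :: "'v set \<Rightarrow> 'v set set \<Rightarrow> 'v set \<Rightarrow> bool" where
  "is_subtree N E V \<longleftrightarrow> V \<subseteq> N \<and> is_tree V (induced_edges E V)"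

definition terminal_subtree :: "'v set \<Rightarrow> 'v set set \<Rightarrow> 'v set \<Rightarrow> bool" where
  "terminal_subtree N E V \<longleftrightarrow> is_subtree N E V \<and>
     (N - V = {} \<or> is_tree (N - V) (induced_edges E (N - V)))"

definition side :: "'v set set \<Rightarrow> 'v set \<Rightarrow> 'v \<Rightarrow> 'v set" where
  "side E e x = {v. (x, v) \<in> (adj_rel (E - {e}))\<^sup>*}"

definition ab_cut :: "'v set \<Rightarrow> 'v set set \<Rightarrow> ('v \<Rightarrow> 'a \<Rightarrow> 'a \<Rightarrow> bool) \<Rightarrow> 'v set \<Rightarrow> 'a \<Rightarrow> 'a \<Rightarrow> bool" where
  "ab_cut N E pref e a b \<longleftrightarrow> e \<in> E \<and>
     (\<exists>x y. e = {x, y} \<and> x \<noteq> y \<and>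
        (\<forall>v\<in>side E e x. pref v a b) \<and> (\<forall>v\<in>side E e y. pref v b a))"

definition single_crossing_tree ::
  "'v set \<Rightarrow> 'a set \<Rightarrow> ('v \<Rightarrow> 'a \<Rightarrow> 'a \<Rightarrow> bool) \<Rightarrow> 'v set set \<Rightarrow> bool" where
  "single_crossing_tree N A pref E \<longleftrightarrow> is_tree N E \<and>
     (\<forall>a\<in>A. \<forall>b\<in>A. a \<noteq> b \<longrightarrow>
        (\<exists>e. ab_cut N E pref e a b) \<or> (\<forall>v\<in>N. pref v a b) \<or> (\<forall>v\<in>N. pref v b a))"

definition minimal_tree ::
  "'v set \<Rightarrow> 'a set \<Rightarrow> ('v \<Rightarrow> 'a \<Rightarrow> 'a \<Rightarrow> bool) \<Rightarrow> 'v set set \<Rightarrow> bool" where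
  "minimal_tree N A pref E \<longleftrightarrow>
     (\<forall>e\<in>E. \<exists>a\<in>A. \<exists>b\<in>A. a \<noteq> b \<and> ab_cut N E pref e a b)"

definition misrep_fun ::
  "'v set \<Rightarrow> 'a set \<Rightarrow> ('v \<Rightarrow> 'a \<Rightarrow> 'a \<Rightarrow> bool) \<Rightarrow> ('v \<Rightarrow> 'a \<Rightarrow> rat) \<Rightarrow> bool" where
  "misrep_fun N A pref r \<longleftrightarrow>
     (\<forall>v\<in>N. \<forall>c\<in>A. r v c \<ge> 0) \<and>
     (\<forall>v\<in>N. \<forall>c\<in>A. \<forall>c'\<in>A. pref v c c' \<longrightarrow> r v c \<le> r v c')"

definition k_assignment :: "'v set \<Rightarrow> 'a set \<Rightarrow> nat \<Rightarrow> ('v \<Rightarrow> 'a) \<Rightarrow> bool" where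
  "k_assignment N A k w \<longleftrightarrow> w ` N \<subseteq> A \<and> card (w ` N) \<le> k"

datatype cc_variant = Utilitarian | Egalitarian

definition total_misrep :: "cc_variant \<Rightarrow> 'v set \<Rightarrow> ('v \<Rightarrow> 'a \<Rightarrow> rat) \<Rightarrow> ('v \<Rightarrow> 'a) \<Rightarrow> rat" where
  "total_misrep rule N r w =
     (case rule of Utilitarian \<Rightarrow> (\<Sum>v\<in>N. r v (w v))
                 | Egalitarian \<Rightarrow> Max ((\<lambda>v. r v (w v)) ` N))"

definition optimal_k_assignment ::
  "cc_variant \<Rightarrow> 'v set \<Rightarrow> 'a set \<Rightarrow> ('v \<Rightarrow> 'a \<Rightarrow> rat) \<Rightarrow> nat \<Rightarrow> ('v \<Rightarrow> 'a) \<Rightarrow> bool" where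
  "optimal_k_assignment rule N A r k w \<longleftrightarrow> k_assignment N A k w \<and>
     (\<forall>w'. k_assignment N A k w' \<longrightarrow> total_misrep rule N r w \<le> total_misrep rule N r w')"

text \<open>Chamberlin--Courant convention: every voter is represented by her most preferred
  alternative among the selected ones w(N).\<close>
definition cc_represents ::
  "'v set \<Rightarrow> ('v \<Rightarrow> 'a \<Rightarrow> 'a \<Rightarrow> bool) \<Rightarrow> ('v \<Rightarrow> 'a) \<Rightarrow> bool" where
  "cc_represents N pref w \<longleftrightarrow>
     (\<forall>v\<in>N. \<forall>c\<in>w ` N. c \<noteq> w v \<longrightarrow> pref v (w v) c)"

end

theory Submission
  imports Defs
begin

lemma slo_asym:
  assumes "strict_linear_order_on A R" "a \<in> A" "b \<in> A" "R a b" "R b a" shows False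
  using assms unfolding strict_linear_order_on_def by blast

lemma adj_sym: "(a,b) \<in> adj_rel F \<Longrightarrow> (b,a) \<in> adj_rel F"
  by (auto simp: adj_rel_def insert_commute)

lemma rtr_sym: "(a,b) \<in> (adj_rel F)\<^sup>* \<Longrightarrow> (b,a) \<in> (adj_rel F)\<^sup>*"
proof (induction rule: rtrancl_induct)
  case base show ?case by simp
next
  case (step y z)
  then show ?case using adj_sym by (meson converse_rtrancl_into_rtrancl)
qed

lemma reach_in_N:
  assumes "\<forall>e\<in>E. e \<subseteq> N" "x \<in> N" "F \<subseteq> E" "(x,v) \<in> (adj_rel F)\<^sup>*" shows "v \<in> N"
  using assms(4)
proof (induction rule: rtrancl_induct)
  case base then show ?case using assms(2) by simp
next
  case (step y z)
  then have "{y,z} \<in> E" using assms(3) by (auto simp: adj_rel_def)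
  then show ?case using assms(1) by blast
qed

lemma side_step:
  assumes "w \<in> side E e X" "(w,p) \<in> adj_rel E" "{w,p} \<noteq> e" shows "p \<in> side E e X"
proof -
  have "(w,p) \<in> adj_rel (E - {e})" using assms(2,3) by (auto simp: adj_rel_def)
  then show ?thesis using assms(1) unfolding side_def by (auto intro: rtrancl_into_rtrancl)
qed

lemma reach_within:
  assumes "(y,v) \<in> (adj_rel F)\<^sup>*" "F \<subseteq> E" "{z. (y,z) \<in> (adj_rel F)\<^sup>*} \<subseteq> T"
  shows "(y,v) \<in> (adj_rel (induced_edges E T))\<^sup>*"
  using assms(1)
proof (induction rule: rtrancl_induct)
  case base then show ?case by simp
next
  case (step y' z)
  have "y' \<in> T" "z \<in> T" using step.hyps assms(3) by auto
  then have "(y',z) \<in> adj_rel (induced_edges E T)"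
    using step.hyps(2) assms(2) by (auto simp: adj_rel_def induced_edges_def)
  then show ?case using step.IH by (auto intro: rtrancl_into_rtrancl)
qed

lemma induced_tree:
  assumes "is_tree N E" "V \<subseteq> N" "V \<noteq> {}"
    "\<forall>a\<in>V. \<forall>b\<in>V. (a,b) \<in> (adj_rel (induced_edges E V))\<^sup>*"
  shows "is_tree V (induced_edges E V)"
proof -
  have "\<not> (\<exists>cs. is_cycle (induced_edges E V) cs)"
  proof
    assume "\<exists>cs. is_cycle (induced_edges E V) cs"
    then obtain cs where "is_cycle (induced_edges E V) cs" by blast
    then have "is_cycle E cs" by (auto simp: is_cycle_def induced_edges_def)
    then show False using assms(1) by (auto simp: is_tree_def)
  qed
  moreover have "finite V" using assms(1,2) finite_subset by (auto simp: is_tree_def)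
  ultimately show ?thesis using assms
    by (auto simp: is_tree_def connected_graph_def induced_edges_def)
qed

definition tdist :: "'v set set \<Rightarrow> 'v \<Rightarrow> 'v \<Rightarrow> nat" where
  "tdist E u v = (LEAST n. (u,v) \<in> (adj_rel E)^^n)"

lemma parent_ex:
  assumes "(u,v) \<in> (adj_rel E)\<^sup>*" "v \<noteq> u"
  shows "\<exists>p. (p,v) \<in> adj_rel E \<and> tdist E u p < tdist E u v"
proof -
  obtain n where "(u,v) \<in> (adj_rel E)^^n" using assms(1) rtrancl_power by blast
  hence h: "(u,v) \<in> (adj_rel E)^^(tdist E u v)" unfolding tdist_def by (rule LeastI)
  then obtain m where m: "tdist E u v = Suc m" using assms(2) by (cases "tdist E u v") auto
  with h obtain p where p: "(u,p) \<in> (adj_rel E)^^m" "(p,v) \<in> adj_rel E" by auto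
  from p(1) have "tdist E u p \<le> m" unfolding tdist_def by (rule Least_le)
  then show ?thesis using m p(2) by auto
qed

lemma strict_dist:
  assumes par: "\<forall>v\<in>N. v \<noteq> u \<longrightarrow> (\<exists>p. (p,v) \<in> adj_rel E \<and> tdist E u p < tdist E u v)"
    and sN: "side E {X,Y} X \<subseteq> N" and uS: "u \<notin> side E {X,Y} X" and YS: "Y \<notin> side E {X,Y} X"
  shows "w \<in> side E {X,Y} X \<Longrightarrow> w \<noteq> X \<Longrightarrow> tdist E u X < tdist E u w"
proof (induction "tdist E u w" arbitrary: w rule: less_induct)
  case less
  have "w \<in> N" "w \<noteq> u" using less.prems sN uS by auto
  then obtain p where p: "(p,w) \<in> adj_rel E" "tdist E u p < tdist E u w" using par by blast
  have ne: "{w,p} \<noteq> {X,Y}"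
  proof
    assume "{w,p} = {X,Y}" then have "w = X \<or> w = Y" by (auto simp: doubleton_eq_iff)
    then show False using less.prems YS by auto
  qed
  have pS: "p \<in> side E {X,Y} X" using side_step[OF less.prems(1) adj_sym[OF p(1)] ne] .
  show ?case
  proof (cases "p = X")
    case True thus ?thesis using p by simp
  next
    case False thus ?thesis using less.hyps[OF p(2) pS False] p by simp
  qed
qed

lemma cut_facts:
  assumes tree: "is_tree N E" and prof: "\<forall>v\<in>N. strict_linear_order_on A (pref v)"
    and bc: "b \<in> A" "c \<in> A"
    and e: "{x,y} \<in> E" and hx: "\<forall>v\<in>side E {x,y} x. pref v b c"
    and hy: "\<forall>v\<in>side E {x,y} y. pref v c b"
  shows "side E {x,y} x \<subseteq> N \<and> side E {x,y} y \<subseteq> N \<and> side E {x,y} x \<inter> side E {x,y} y = {}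
    \<and> N \<subseteq> side E {x,y} x \<union> side E {x,y} y \<and> x \<in> side E {x,y} x \<and> y \<in> side E {x,y} y"
proof -
  have EN: "\<forall>e\<in>E. e \<subseteq> N" and conn: "connected_graph N E" using tree by (auto simp: is_tree_def)
  have xN: "x \<in> N" "y \<in> N" using e EN by auto
  have s1: "side E {x,y} x \<subseteq> N" using reach_in_N[OF EN xN(1), of "E - {{x,y}}"] unfolding side_def by auto
  have s2: "side E {x,y} y \<subseteq> N" using reach_in_N[OF EN xN(2), of "E - {{x,y}}"] unfolding side_def by auto
  have xin: "x \<in> side E {x,y} x" "y \<in> side E {x,y} y" unfolding side_def by auto
  have disj: "side E {x,y} x \<inter> side E {x,y} y = {}"
  proof (rule ccontr)
    assume "side E {x,y} x \<inter> side E {x,y} y \<noteq> {}"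
    then obtain v where v: "v \<in> side E {x,y} x" "v \<in> side E {x,y} y" by blast
    then have "v \<in> N" using s1 by auto
    then show False using slo_asym[of A "pref v" b c] prof bc hx hy v by blast
  qed
  have cover: "N \<subseteq> side E {x,y} x \<union> side E {x,y} y"
  proof
    fix v assume "v \<in> N" then have "(x,v) \<in> (adj_rel E)\<^sup>*" using conn xN unfolding connected_graph_def by auto
    then show "v \<in> side E {x,y} x \<union> side E {x,y} y"
    proof (induction rule: rtrancl_induct)
      case base show ?case using xin by auto
    next
      case (step z v)
      show ?case
      proof (cases "{z,v} = {x,y}")
        case True then have "v = x \<or> v = y" by (auto simp: doubleton_eq_iff)
        then show ?thesis using xin by auto
      next
        case False
        from step.IH show ?thesis
        proof
          assume "z \<in> side E {x,y} x"
          from side_step[OF this step.hyps(2) False] show ?thesis by (rule UnI1)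
        next
          assume "z \<in> side E {x,y} y"
          from side_step[OF this step.hyps(2) False] show ?thesis by (rule UnI2)
        qed
      qed
    qed
  qed
  show ?thesis using s1 s2 disj cover xin by blast
qed

theorem lemma3:
  fixes N :: "'v set" and A :: "'a set" and pref :: "'v \<Rightarrow> 'a \<Rightarrow> 'a \<Rightarrow> bool"
    and E :: "'v set set" and r :: "'v \<Rightarrow> 'a \<Rightarrow> rat" and k :: nat
    and rule :: cc_variant and w :: "'v \<Rightarrow> 'a" and u :: 'v and b :: 'a
  assumes "profile N A pref"
    and "single_crossing_tree N A pref E"
    and "minimal_tree N A pref E"
    and "misrep_fun N A pref r"
    and "optimal_k_assignment rule N A r k w"
    and "cc_represents N pref w"
    and "u \<in> N"
    and "b \<in> w ` N"
    and "\<forall>c\<in>w ` N. c \<noteq> b \<longrightarrow> pref u c b"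
  shows "terminal_subtree N E {v \<in> N. w v = b}"
proof -
  from assms(1) have prof: "\<forall>v\<in>N. strict_linear_order_on A (pref v)" unfolding profile_def by auto
  from assms(2) have tree: "is_tree N E" and sc: "\<forall>a\<in>A. \<forall>b\<in>A. a \<noteq> b \<longrightarrow>
        (\<exists>e. ab_cut N E pref e a b) \<or> (\<forall>v\<in>N. pref v a b) \<or> (\<forall>v\<in>N. pref v b a)"
    unfolding single_crossing_tree_def by auto
  have WA: "w ` N \<subseteq> A" using assms(5) unfolding optimal_k_assignment_def k_assignment_def by auto
  have ccr: "\<forall>v\<in>N. \<forall>c\<in>w ` N. c \<noteq> w v \<longrightarrow> pref v (w v) c" using assms(6) unfolding cc_represents_def by blast
  have EN: "\<forall>e\<in>E. e \<subseteq> N" and conn: "connected_graph N E" using tree unfolding is_tree_def by auto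
  define C where "C = w ` N - {b}"
  define Vb where "Vb = {v\<in>N. w v = b}"
  have bA: "b \<in> A" using assms(8) WA by auto
  obtain v1 where v1: "v1 \<in> N" "w v1 = b" using assms(8) by auto
  have puN: "strict_linear_order_on A (pref u)" using prof assms(7) by auto
  have cut: "\<forall>c\<in>C. \<exists>xy. {fst xy, snd xy} \<in> E \<and> fst xy \<noteq> snd xy
     \<and> (\<forall>v\<in>side E {fst xy, snd xy} (fst xy). pref v b c)
     \<and> (\<forall>v\<in>side E {fst xy, snd xy} (snd xy). pref v c b)"
  proof
    fix c assume c: "c \<in> C"
    have cA: "c \<in> A" "c \<noteq> b" using c C_def WA by auto
    have pu: "pref u c b" using assms(9) c C_def by auto
    have pv1: "pref v1 b c" using ccr v1 c C_def by auto
    from sc bA cA have "(\<exists>e. ab_cut N E pref e b c) \<or> (\<forall>v\<in>N. pref v b c) \<or> (\<forall>v\<in>N. pref v c b)" by auto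
    moreover have "\<not> (\<forall>v\<in>N. pref v b c)" using pu assms(7) slo_asym[OF puN bA cA(1)] by blast
    moreover have "\<not> (\<forall>v\<in>N. pref v c b)" using pv1 v1 slo_asym[of A "pref v1" b c] prof bA cA by blast
    ultimately obtain e where "ab_cut N E pref e b c" by blast
    then obtain x y where "e = {x,y}" "x \<noteq> y" "e \<in> E" "\<forall>v\<in>side E e x. pref v b c" "\<forall>v\<in>side E e y. pref v c b"
      unfolding ab_cut_def by blast
    then show "\<exists>xy. {fst xy, snd xy} \<in> E \<and> fst xy \<noteq> snd xy
     \<and> (\<forall>v\<in>side E {fst xy, snd xy} (fst xy). pref v b c)
     \<and> (\<forall>v\<in>side E {fst xy, snd xy} (snd xy). pref v c b)"
      by (intro exI[of _ "(x,y)"]) auto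
  qed
  then obtain XY where XY0: "\<forall>c\<in>C. {fst (XY c), snd (XY c)} \<in> E \<and> fst (XY c) \<noteq> snd (XY c)
     \<and> (\<forall>v\<in>side E {fst (XY c), snd (XY c)} (fst (XY c)). pref v b c)
     \<and> (\<forall>v\<in>side E {fst (XY c), snd (XY c)} (snd (XY c)). pref v c b)"
    by (metis (no_types, lifting) bchoice)
  define X where "X c = fst (XY c)" for c
  define Y where "Y c = snd (XY c)" for c
  define sX where "sX c = side E {X c, Y c} (X c)" for c
  define sY where "sY c = side E {X c, Y c} (Y c)" for c
  have XY: "\<forall>c\<in>C. {X c, Y c} \<in> E \<and> X c \<noteq> Y c \<and> (\<forall>v\<in>sX c. pref v b c) \<and> (\<forall>v\<in>sY c. pref v c b)"
    using XY0 unfolding X_def Y_def sX_def sY_def by blast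
  have facts: "\<forall>c\<in>C. sX c \<subseteq> N \<and> sY c \<subseteq> N \<and> sX c \<inter> sY c = {} \<and> N \<subseteq> sX c \<union> sY c
     \<and> X c \<in> sX c \<and> Y c \<in> sY c"
  proof
    fix c assume c: "c \<in> C"
    then have "c \<in> A" using C_def WA by auto
    then show "sX c \<subseteq> N \<and> sY c \<subseteq> N \<and> sX c \<inter> sY c = {} \<and> N \<subseteq> sX c \<union> sY c
     \<and> X c \<in> sX c \<and> Y c \<in> sY c"
      using cut_facts[OF tree prof bA, of c "X c" "Y c"] XY c unfolding sX_def sY_def by blast
  qed
  have uY: "\<forall>c\<in>C. u \<in> sY c \<and> u \<notin> sX c"
  proof
    fix c assume c: "c \<in> C"
    have cA: "c \<in> A" using c C_def WA by auto
    have pu: "pref u c b" using assms(9) c C_def by auto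
    have "u \<notin> sX c" using XY c pu slo_asym[OF puN bA cA] by blast
    then show "u \<in> sY c \<and> u \<notin> sX c" using facts c assms(7) by blast
  qed
  have Vb_eq: "Vb = {v\<in>N. \<forall>c\<in>C. v \<in> sX c}"
  proof (intro set_eqI iffI)
    fix v assume v: "v \<in> Vb"
    show "v \<in> {v\<in>N. \<forall>c\<in>C. v \<in> sX c}"
    proof (intro CollectI conjI ballI)
      show "v \<in> N" using v Vb_def by auto
      fix c assume c: "c \<in> C"
      have cA: "c \<in> A" using c C_def WA by auto
      have "pref v b c" using ccr v c C_def Vb_def by auto
      moreover have "v \<notin> sY c \<or> \<not> pref v c b" using slo_asym[of A "pref v" b c] prof bA cA \<open>v\<in>N\<close> calculation by blast
      ultimately show "v \<in> sX c" using facts XY c \<open>v\<in>N\<close> by blast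
    qed
  next
    fix v assume v: "v \<in> {v\<in>N. \<forall>c\<in>C. v \<in> sX c}"
    show "v \<in> Vb"
    proof (rule ccontr)
      assume "v \<notin> Vb"
      then have ne: "w v \<noteq> b" "v \<in> N" using v Vb_def by auto
      then have c: "w v \<in> C" using C_def by auto
      then have "pref v b (w v)" using v XY by blast
      moreover have "pref v (w v) b" using ccr ne assms(8) by auto
      ultimately show False using slo_asym[of A "pref v" b "w v"] prof bA WA ne by blast
    qed
  qed
  have v1Vb: "v1 \<in> Vb" using v1 Vb_def by auto
  show ?thesis
  proof (cases "C = {}")
    case True
    then have "Vb = N" using Vb_eq by auto
    moreover have "induced_edges E N = E" using EN by (auto simp: induced_edges_def)
    ultimately show ?thesis using tree unfolding terminal_subtree_def is_subtree_def Vb_def by auto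
  next
    case False
    then obtain c0 where c0: "c0 \<in> C" by blast
    have uVb: "u \<notin> Vb" using Vb_eq uY c0 by blast
    have VbN: "Vb \<subseteq> N" using Vb_def by auto
    have par: "\<forall>v\<in>N. v \<noteq> u \<longrightarrow> (\<exists>p. (p,v) \<in> adj_rel E \<and> tdist E u p < tdist E u v)"
    proof (intro ballI impI)
      fix v assume "v \<in> N" "v \<noteq> u"
      then have "(u,v) \<in> (adj_rel E)\<^sup>*" using conn assms(7) unfolding connected_graph_def by blast
      then show "\<exists>p. (p,v) \<in> adj_rel E \<and> tdist E u p < tdist E u v" by (rule parent_ex[OF _ \<open>v \<noteq> u\<close>])
    qed
    obtain v0 where v0: "v0 \<in> Vb" "\<forall>v. v \<in> Vb \<longrightarrow> tdist E u v0 \<le> tdist E u v"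
      using ex_has_least_nat[of "\<lambda>v. v \<in> Vb", OF v1Vb, of "tdist E u"] by blast
    have sd: "\<And>c z. c \<in> C \<Longrightarrow> z \<in> sX c \<Longrightarrow> z \<noteq> X c \<Longrightarrow> tdist E u (X c) < tdist E u z"
    proof -
      fix c z assume c: "c \<in> C" and z: "z \<in> sX c" "z \<noteq> X c"
      have "sX c \<subseteq> N" "u \<notin> sX c" "Y c \<notin> sX c" using facts uY c by blast+
      then show "tdist E u (X c) < tdist E u z"
        using strict_dist[OF par, of "X c" "Y c" z] z unfolding sX_def by blast
    qed
    have toV0: "\<And>v. v \<in> Vb \<Longrightarrow> (v, v0) \<in> (adj_rel (induced_edges E Vb))\<^sup>*"
    proof -
      fix v show "v \<in> Vb \<Longrightarrow> (v, v0) \<in> (adj_rel (induced_edges E Vb))\<^sup>*"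
      proof (induction "tdist E u v" arbitrary: v rule: less_induct)
        case less
        show ?case
        proof (cases "v = v0")
          case True then show ?thesis by simp
        next
          case False
          have notX: "\<forall>c\<in>C. v \<noteq> X c"
          proof (intro ballI notI)
            fix c assume c: "c \<in> C" and vX: "v = X c"
            have "v0 \<in> sX c" using v0 Vb_eq c by blast
            then have "tdist E u v < tdist E u v0" using sd[OF c] vX False by metis
            then show False using v0 less.prems by force
          qed
          have vN: "v \<in> N" "v \<noteq> u" using less.prems VbN uVb by auto
          then obtain p where p: "(p,v) \<in> adj_rel E" "tdist E u p < tdist E u v" using par by blast
          have pN: "p \<in> N" using p(1) EN by (auto simp: adj_rel_def)
          have "\<forall>c\<in>C. p \<in> sX c"
          proof
            fix c assume c: "c \<in> C"
            have vs: "v \<in> sX c" using less.prems Vb_eq c by blast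
            have "{v,p} \<noteq> {X c, Y c}"
            proof
              assume "{v,p} = {X c, Y c}" then have "v = X c \<or> v = Y c" by (auto simp: doubleton_eq_iff)
              then show False using notX c facts vs by blast
            qed
            then show "p \<in> sX c" using side_step[of v E "{X c, Y c}" "X c" p] vs adj_sym[OF p(1)]
              unfolding sX_def by blast
          qed
          then have pV: "p \<in> Vb" using Vb_eq pN by blast
          have "(v,p) \<in> adj_rel (induced_edges E Vb)" using p(1) pV less.prems
            by (auto simp: adj_rel_def induced_edges_def insert_commute)
          then show ?thesis using less.hyps[OF p(2) pV] by (auto intro: converse_rtrancl_into_rtrancl)
        qed
      qed
    qed
    have "\<forall>a\<in>Vb. \<forall>b\<in>Vb. (a,b) \<in> (adj_rel (induced_edges E Vb))\<^sup>*"
    proof (intro ballI)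
      fix a c assume "a \<in> Vb" "c \<in> Vb"
      from toV0[OF this(1)] rtr_sym[OF toV0[OF this(2)]]
      show "(a,c) \<in> (adj_rel (induced_edges E Vb))\<^sup>*" by (rule rtrancl_trans)
    qed
    then have sub: "is_subtree N E Vb"
      unfolding is_subtree_def using induced_tree[OF tree VbN] v1Vb VbN by blast
    have compl: "N - Vb = {v\<in>N. \<exists>c\<in>C. v \<in> sY c}" using Vb_eq facts by blast
    have toU: "\<And>v. v \<in> N - Vb \<Longrightarrow> (v, u) \<in> (adj_rel (induced_edges E (N - Vb)))\<^sup>*"
    proof -
      fix v assume v: "v \<in> N - Vb"
      then obtain c where c: "c \<in> C" "v \<in> sY c" using compl by blast
      have sub2: "{z. (Y c, z) \<in> (adj_rel (E - {{X c, Y c}}))\<^sup>*} \<subseteq> N - Vb"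
      proof
        fix z assume "z \<in> {z. (Y c, z) \<in> (adj_rel (E - {{X c, Y c}}))\<^sup>*}"
        then have zs: "z \<in> sY c" unfolding sY_def side_def by simp
        then have "z \<in> N" using facts c(1) by blast
        with zs c(1) show "z \<in> N - Vb" unfolding compl by blast
      qed
      have r1: "(Y c, v) \<in> (adj_rel (induced_edges E (N - Vb)))\<^sup>*"
        using reach_within[OF _ _ sub2] c(2) unfolding sY_def side_def by simp
      have r2: "(Y c, u) \<in> (adj_rel (induced_edges E (N - Vb)))\<^sup>*"
      proof -
        have "u \<in> sY c" using uY c(1) by blast
        then show ?thesis using reach_within[OF _ _ sub2] unfolding sY_def side_def by simp
      qed
      show "(v, u) \<in> (adj_rel (induced_edges E (N - Vb)))\<^sup>*"
        using rtr_sym[OF r1] r2 by (blast intro: rtrancl_trans)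
    qed
    have "\<forall>a\<in>N - Vb. \<forall>b\<in>N - Vb. (a,b) \<in> (adj_rel (induced_edges E (N - Vb)))\<^sup>*"
    proof (intro ballI)
      fix a c assume "a \<in> N - Vb" "c \<in> N - Vb"
      from toU[OF this(1)] rtr_sym[OF toU[OF this(2)]]
      show "(a,c) \<in> (adj_rel (induced_edges E (N - Vb)))\<^sup>*" by (rule rtrancl_trans)
    qed
    moreover have "N - Vb \<noteq> {}" using assms(7) uVb by blast
    ultimately have "is_tree (N - Vb) (induced_edges E (N - Vb))"
      using induced_tree[OF tree, of "N - Vb"] by blast
    then have "terminal_subtree N E Vb" using sub unfolding terminal_subtree_def by blast
    then show ?thesis unfolding Vb_def .
  qed
qed

end
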